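(* Let $1 \le s \le r$ be fixed integers and let $n \ge r$. Let $H_1, H_2, \ldots$ be independent, each uniformly distributed over the $r$-element subsets of $[n] = \{1, \ldots, n\}$. An $s$-element subset $S \subseteq [n]$ is said to be collected by time $k$ if $S \subseteq H_t$ for some $t \le k$. Let $T^{(r,s)}$ be the smallest $k$ such that all $\binom{n}{s}$ $s$-element subsets of $[n]$ have been collected by time $k$. Then, as $n \to \infty$, \[ \frac{T^{(r,s)} - \binom{n}{s}\log\binom{n}{s}\big/\binom{r}{s}}{\binom{n}{s}\big/\binom{r}{s}} \] converges weakly to a standard Gumbel distribution, i.e. the distribution with cumulative distribution function $x \mapsto e^{-e^{-x}}$.
   Context: In each round $t$ one draws $r$ distinct coupons uniformly at random (without replacement) from $[n]$, independently across rounds; all $s$-subsets of the drawn $r$-set are marked as collected. *)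

theory Defs
  imports "HOL-Probability.Probability"
begin

definition r_subsets :: "nat \<Rightarrow> nat \<Rightarrow> nat set set" where
  "r_subsets n r = {A. A \<subseteq> {1..n} \<and> card A = r}"

text \<open>Given the draws H 0, ..., H (k-1) (rounds 1..k), every s-subset of [n] is collected by time k.\<close>
definition all_collected_by :: "nat \<Rightarrow> nat \<Rightarrow> nat \<Rightarrow> (nat \<Rightarrow> nat set) \<Rightarrow> bool" where
  "all_collected_by n s k H = (\<forall>S. S \<subseteq> {1..n} \<and> card S = s \<longrightarrow> (\<exists>t<k. S \<subseteq> H t))"

definition rounds_pmf :: "nat \<Rightarrow> nat \<Rightarrow> nat \<Rightarrow> (nat \<Rightarrow> nat set) pmf" where
  "rounds_pmf n r k = Pi_pmf {..<k} {} (\<lambda>_. pmf_of_set (r_subsets n r))"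

definition prob_T_le :: "nat \<Rightarrow> nat \<Rightarrow> nat \<Rightarrow> nat \<Rightarrow> real" where
  "prob_T_le n r s k = measure_pmf.prob (rounds_pmf n r k) {H. all_collected_by n s k H}"

text \<open>CDF of the normalised variable (T - a_n)/b_n, with b_n = C(n,s)/C(r,s), a_n = b_n log C(n,s).
  Since T is integer valued and T \<ge> 1 (there are s-subsets), P(T \<le> y) = P(T \<le> nat (floor y)).\<close>
definition T_norm_cdf :: "nat \<Rightarrow> nat \<Rightarrow> nat \<Rightarrow> real \<Rightarrow> real" where
  "T_norm_cdf r s n x =
     (let b = real (n choose s) / real (r choose s);
          a = b * ln (real (n choose s))
      in prob_T_le n r s (nat \<lfloor>a + b * x\<rfloor>))"

definition gumbel_cdf :: "real \<Rightarrow> real" where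
  "gumbel_cdf x = exp (- exp (- x))"

end

theory Submission
  imports Defs "HOL-Real_Asymp.Real_Asymp"
begin


lemma finite_r_subsets: "finite (r_subsets n r)"
  unfolding r_subsets_def by (rule finite_subset[of _ "Pow {1..n}"]) auto

lemma card_r_subsets: "card (r_subsets n r) = n choose r"
  unfolding r_subsets_def using n_subsets[of "{1..n}" r] by simp

lemma r_subsets_ne: "r \<le> n \<Longrightarrow> r_subsets n r \<noteq> {}"
proof -
  assume "r \<le> n"
  hence "{1..r} \<in> r_subsets n r" unfolding r_subsets_def by auto
  thus ?thesis by auto
qed

lemma card_sup:
  assumes T: "T \<subseteq> {1..n}" "card T = t" "t \<le> r"
  shows "card {A \<in> r_subsets n r. T \<subseteq> A} = (n - t) choose (r - t)"
proof -
  have fT: "finite T" using T(1) finite_subset by blast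
  have eq: "{A \<in> r_subsets n r. T \<subseteq> A} = (\<lambda>B. B \<union> T) ` {B. B \<subseteq> {1..n} - T \<and> card B = r - t}"
  proof (rule set_eqI, rule iffI)
    fix A assume "A \<in> {A \<in> r_subsets n r. T \<subseteq> A}"
    hence A: "A \<subseteq> {1..n}" "card A = r" "T \<subseteq> A" by (auto simp: r_subsets_def)
    have fA: "finite A" using A(1) finite_subset by blast
    have "card (A - T) = r - t" using A T fT by (simp add: card_Diff_subset)
    moreover have "A = (A - T) \<union> T" using A by auto
    ultimately show "A \<in> (\<lambda>B. B \<union> T) ` {B. B \<subseteq> {1..n} - T \<and> card B = r - t}"
      using A by (intro image_eqI[of _ _ "A - T"]) auto
  next
    fix A assume "A \<in> (\<lambda>B. B \<union> T) ` {B. B \<subseteq> {1..n} - T \<and> card B = r - t}"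
    then obtain B where B: "B \<subseteq> {1..n} - T" "card B = r - t" "A = B \<union> T" by auto
    have fB: "finite B" using B(1) finite_subset by blast
    have "card A = card B + card T" unfolding B(3) using B T fT fB by (intro card_Un_disjoint) auto
    hence "card A = r" using B T by simp
    thus "A \<in> {A \<in> r_subsets n r. T \<subseteq> A}" using B T by (auto simp: r_subsets_def)
  qed
  have inj: "inj_on (\<lambda>B. B \<union> T) {B. B \<subseteq> {1..n} - T \<and> card B = r - t}"
    by (rule inj_onI) auto
  have "card {B. B \<subseteq> {1..n} - T \<and> card B = r - t} = card ({1..n} - T) choose (r - t)"
    by (rule n_subsets) simp
  also have "card ({1..n} - T) = n - t" using T fT by (simp add: card_Diff_subset)
  finally show ?thesis unfolding eq using card_image[OF inj] by simp
qed

lemma sup_big: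
  assumes "r < card T"
  shows "{A \<in> r_subsets n r. T \<subseteq> A} = {}"
proof -
  { fix A assume "A \<in> r_subsets n r" "T \<subseteq> A"
    hence "card T \<le> card A" unfolding r_subsets_def
      by (intro card_mono) (auto intro: finite_subset)
    with \<open>A \<in> r_subsets n r\<close> assms have False by (auto simp: r_subsets_def) }
  thus ?thesis by auto
qed

lemma pair_bound:
  assumes S: "S \<in> r_subsets n s" and S': "S' \<in> r_subsets n s" and ne: "S \<noteq> S'"
    and sr: "s \<le> r" and rn: "r \<le> n"
  shows "real (card {A \<in> r_subsets n r. S \<subseteq> A \<and> S' \<subseteq> A}) * (real n - real s)
         \<le> real ((n - s) choose (r - s)) * (real r - real s)"
proof -
  have Ss: "S \<subseteq> {1..n}" "card S = s" using S by (auto simp: r_subsets_def)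
  have Ss': "S' \<subseteq> {1..n}" "card S' = s" using S' by (auto simp: r_subsets_def)
  have fS: "finite S" using Ss finite_subset by blast
  obtain y where y: "y \<in> S'" "y \<notin> S"
  proof -
    have "\<not> S' \<subseteq> S"
    proof
      assume "S' \<subseteq> S"
      hence "S' = S" using Ss Ss' fS by (intro card_subset_eq) auto
      thus False using ne by simp
    qed
    thus ?thesis using that by auto
  qed
  define T where "T = insert y S"
  have T: "T \<subseteq> {1..n}" "card T = s + 1" using y Ss Ss' fS by (auto simp: T_def)
  have sub: "{A \<in> r_subsets n r. S \<subseteq> A \<and> S' \<subseteq> A} \<subseteq> {A \<in> r_subsets n r. T \<subseteq> A}"
    using y by (auto simp: T_def)
  have cle: "card {A \<in> r_subsets n r. S \<subseteq> A \<and> S' \<subseteq> A} \<le> card {A \<in> r_subsets n r. T \<subseteq> A}"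
    by (rule card_mono[OF _ sub]) (use finite_r_subsets in auto)
  show ?thesis
  proof (cases "s = r")
    case True
    hence "{A \<in> r_subsets n r. T \<subseteq> A} = {}" using T by (intro sup_big) auto
    hence "card {A \<in> r_subsets n r. S \<subseteq> A \<and> S' \<subseteq> A} = 0" using cle by (metis card.empty le_zero_eq)
    thus ?thesis using True by simp
  next
    case False
    hence sr': "s + 1 \<le> r" using sr by simp
    have c: "card {A \<in> r_subsets n r. T \<subseteq> A} = (n - (s+1)) choose (r - (s+1))"
      by (rule card_sup[OF T sr'])
    have "Suc (n - (s+1)) * ((n - (s+1)) choose (r - (s+1)))
          = (Suc (n - (s+1)) choose Suc (r - (s+1))) * Suc (r - (s+1))"
      by (rule Suc_times_binomial_eq)
    moreover have "Suc (n - (s+1)) = n - s" "Suc (r - (s+1)) = r - s" using sr' rn by auto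
    ultimately have id: "(n - s) * ((n - (s+1)) choose (r - (s+1))) = ((n - s) choose (r - s)) * (r - s)"
      by metis
    have "real (card {A \<in> r_subsets n r. S \<subseteq> A \<and> S' \<subseteq> A}) * (real n - real s)
          \<le> real ((n - (s+1)) choose (r - (s+1))) * (real n - real s)"
      using cle c sr' rn by (intro mult_right_mono) auto
    also have "\<dots> = real ((n - s) * ((n - (s+1)) choose (r - (s+1))))"
      using sr' rn by (simp add: of_nat_diff)
    also have "\<dots> = real ((n - s) choose (r - s)) * (real r - real s)"
      unfolding id using sr' by (simp add: of_nat_diff)
    finally show ?thesis .
  qed
qed

lemma card_UN_lower:
  assumes "finite F" "\<And>i. i \<in> F \<Longrightarrow> finite (A i)"
  shows "(\<Sum>i\<in>F. real (card (A i))) - (\<Sum>i\<in>F. \<Sum>i'\<in>F-{i}. real (card (A i \<inter> A i')))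
         \<le> real (card (\<Union>i\<in>F. A i))"
  using assms
proof (induction F rule: finite_induct)
  case empty
  then show ?case by simp
next
  case (insert a F)
  define U where "U = (\<Union>i\<in>F. A i)"
  have fU: "finite U" using insert by (auto simp: U_def)
  have fa: "finite (A a)" using insert by auto
  have IH: "(\<Sum>i\<in>F. real (card (A i))) - (\<Sum>i\<in>F. \<Sum>i'\<in>F-{i}. real (card (A i \<inter> A i')))
         \<le> real (card U)" using insert unfolding U_def by auto
  have un: "card (A a \<union> U) + card (A a \<inter> U) = card (A a) + card U"
    using card_Un_Int[OF fa fU] by simp
  have "A a \<inter> U = (\<Union>i\<in>F. A a \<inter> A i)" by (auto simp: U_def)
  hence "card (A a \<inter> U) \<le> (\<Sum>i\<in>F. card (A a \<inter> A i))"
    using card_UN_le[OF insert(1), of "\<lambda>i. A a \<inter> A i"] by simp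
  hence int: "real (card (A a \<inter> U)) \<le> (\<Sum>i\<in>F. real (card (A a \<inter> A i)))"
    by (metis of_nat_le_iff of_nat_sum)
  have rows: "(\<Sum>i\<in>F. \<Sum>i'\<in>F-{i}. real (card (A i \<inter> A i')))
       \<le> (\<Sum>i\<in>F. \<Sum>i'\<in>insert a F-{i}. real (card (A i \<inter> A i')))"
    using insert(1) by (intro sum_mono sum_mono2) auto
  have "(\<Sum>i\<in>insert a F. \<Sum>i'\<in>insert a F-{i}. real (card (A i \<inter> A i')))
      = (\<Sum>i'\<in>F. real (card (A a \<inter> A i'))) + (\<Sum>i\<in>F. \<Sum>i'\<in>insert a F-{i}. real (card (A i \<inter> A i')))"
    using insert(1,2) by (simp add: insert_Diff_if)
  moreover have "(\<Sum>i\<in>insert a F. real (card (A i))) = real (card (A a)) + (\<Sum>i\<in>F. real (card (A i)))"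
    using insert(1,2) by simp
  moreover have "real (card (\<Union>i\<in>insert a F. A i)) = real (card (A a \<union> U))" by (simp add: U_def)
  ultimately show ?case using IH rows int un
    by (smt (verit) of_nat_add)
qed

definition Bad :: "nat \<Rightarrow> nat \<Rightarrow> nat set set \<Rightarrow> nat set set" where
  "Bad n r F = {A \<in> r_subsets n r. \<exists>S\<in>F. S \<subseteq> A}"

lemma Bad_bounds:
  assumes F: "F \<subseteq> r_subsets n s" "card F = j" and sr: "s \<le> r" and rn: "r \<le> n" and sn: "s < n"
  shows "real (card (Bad n r F)) \<le> real j * real ((n - s) choose (r - s))"
    and "real j * real ((n - s) choose (r - s))
           - real j ^ 2 * real ((n - s) choose (r - s)) * ((real r - real s) / (real n - real s))
         \<le> real (card (Bad n r F))"
proof -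
  define A where "A = (\<lambda>S. {A \<in> r_subsets n r. S \<subseteq> A})"
  define C where "C = (n - s) choose (r - s)"
  define d where "d = (real r - real s) / (real n - real s)"
  have fF: "finite F" using F finite_r_subsets finite_subset by blast
  have B: "Bad n r F = (\<Union>S\<in>F. A S)" by (auto simp: Bad_def A_def)
  have cA: "card (A S) = C" if "S \<in> F" for S
    using that F sr unfolding A_def C_def by (intro card_sup) (auto simp: r_subsets_def)
  have finA: "finite (A S)" for S unfolding A_def using finite_r_subsets by auto
  have "card (Bad n r F) \<le> (\<Sum>S\<in>F. card (A S))" unfolding B by (rule card_UN_le[OF fF])
  also have "\<dots> = j * C" using cA F by simp
  finally show "real (card (Bad n r F)) \<le> real j * real ((n - s) choose (r - s))"
    unfolding C_def by (metis of_nat_le_iff of_nat_mult)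
  have pair: "real (card (A S \<inter> A S')) \<le> real C * d" if "S \<in> F" "S' \<in> F - {S}" for S S'
  proof -
    have "real (card (A S \<inter> A S')) * (real n - real s) \<le> real C * (real r - real s)"
      using pair_bound[of S n s S' r] that F sr rn unfolding A_def C_def
      by (auto simp: Int_def conj_ac)
    thus ?thesis using sn unfolding d_def by (simp add: field_simps)
  qed
  have "(\<Sum>S\<in>F. \<Sum>S'\<in>F-{S}. real (card (A S \<inter> A S'))) \<le> (\<Sum>S\<in>F. \<Sum>S'\<in>F-{S}. real C * d)"
    using pair by (intro sum_mono) auto
  also have "\<dots> \<le> (\<Sum>S\<in>F. \<Sum>S'\<in>F. real C * d)"
    using fF sr sn by (intro sum_mono sum_mono2) (auto simp: d_def)
  also have "\<dots> = real j ^ 2 * real C * d" using F by (simp add: power2_eq_square)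
  finally have P: "(\<Sum>S\<in>F. \<Sum>S'\<in>F-{S}. real (card (A S \<inter> A S'))) \<le> real j ^ 2 * real C * d" .
  have "(\<Sum>S\<in>F. real (card (A S))) = real j * real C" using cA F by simp
  with card_UN_lower[OF fF, of A, OF finA] P show "real j * real ((n - s) choose (r - s))
           - real j ^ 2 * real ((n - s) choose (r - s)) * ((real r - real s) / (real n - real s))
         \<le> real (card (Bad n r F))" unfolding B C_def[symmetric] d_def[symmetric] by linarith
qed



lemma prob_rounds:
  "measure_pmf.prob (rounds_pmf n r k) {H. \<forall>t<k. H t \<in> G}
     = (measure_pmf.prob (pmf_of_set (r_subsets n r)) G) ^ k"
proof -
  let ?M = "rounds_pmf n r k"
  have "{H. \<forall>t<k. H t \<in> G} \<inter> set_pmf ?M = PiE_dflt {..<k} {} (\<lambda>_. G) \<inter> set_pmf ?M"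
    using set_Pi_pmf_subset[of "{..<k}" "{}" "\<lambda>_. pmf_of_set (r_subsets n r)"]
    unfolding rounds_pmf_def PiE_dflt_def by auto
  hence "measure_pmf.prob ?M {H. \<forall>t<k. H t \<in> G} = measure_pmf.prob ?M (PiE_dflt {..<k} {} (\<lambda>_. G))"
    using measure_Int_set_pmf[of ?M "{H. \<forall>t<k. H t \<in> G}"] measure_Int_set_pmf[of ?M "PiE_dflt {..<k} {} (\<lambda>_. G)"]
    by simp
  also have "\<dots> = (\<Prod>x\<in>{..<k}. measure_pmf.prob (pmf_of_set (r_subsets n r)) G)"
    unfolding rounds_pmf_def by (rule measure_Pi_pmf_PiE_dflt) simp
  finally show ?thesis by simp
qed

lemma alt_choose_sum:
  assumes "m \<ge> 1"
  shows "(\<Sum>j\<le>J. (-1)^j * real (m choose j)) = (-1)^J * real ((m - 1) choose J)"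
proof -
  obtain m' where m: "m = Suc m'" using assms by (cases m) auto
  show ?thesis unfolding m
  proof (induction J)
    case 0 then show ?case by simp
  next
    case (Suc J)
    have "(\<Sum>j\<le>Suc J. (-1)^j * real (Suc m' choose j))
        = (-1)^J * real (m' choose J) + (-1)^(Suc J) * real (Suc m' choose Suc J)"
      using Suc by simp
    also have "real (Suc m' choose Suc J) = real (m' choose J) + real (m' choose Suc J)" by simp
    finally show ?case by (simp add: algebra_simps)
  qed
qed

lemma bonf_point:
  fixes m :: nat
  shows "(if m = 0 then 1 else 0) \<le> (\<Sum>j\<le>2*L. (-1)^j * real (m choose j))"
    and "(\<Sum>j\<le>2*L+1. (-1)^j * real (m choose j)) \<le> (if m = 0 then 1 else 0)"
proof -
  show "(if m = 0 then 1 else 0) \<le> (\<Sum>j\<le>2*L. (-1)^j * real (m choose j))"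
  proof (cases "m = 0")
    case True thus ?thesis by (simp add: sum.atMost_shift)
  next
    case False thus ?thesis using alt_choose_sum[of m "2*L"] by simp
  qed
  show "(\<Sum>j\<le>2*L+1. (-1)^j * real (m choose j)) \<le> (if m = 0 then 1 else 0)"
  proof (cases "m = 0")
    case True thus ?thesis by (simp add: sum.atMost_shift)
  next
    case False thus ?thesis using alt_choose_sum[of m "2*L+1"] by simp
  qed
qed

definition Uc :: "nat \<Rightarrow> nat \<Rightarrow> nat \<Rightarrow> (nat \<Rightarrow> nat set) \<Rightarrow> nat set set" where
  "Uc n s k H = {S \<in> r_subsets n s. \<forall>t<k. \<not> S \<subseteq> H t}"

definition Fam :: "nat \<Rightarrow> nat \<Rightarrow> nat \<Rightarrow> nat set set set" where
  "Fam n s j = {F. F \<subseteq> r_subsets n s \<and> card F = j}"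

definition Good :: "nat set set \<Rightarrow> nat set set" where
  "Good F = {A. \<forall>S\<in>F. \<not> S \<subseteq> A}"

definition Ev :: "nat \<Rightarrow> nat set set \<Rightarrow> (nat \<Rightarrow> nat set) set" where
  "Ev k F = {H. \<forall>t<k. H t \<in> Good F}"

definition Sj :: "nat \<Rightarrow> nat \<Rightarrow> nat \<Rightarrow> nat \<Rightarrow> nat \<Rightarrow> real" where
  "Sj n r s k j = (\<Sum>F\<in>Fam n s j. measure_pmf.prob (rounds_pmf n r k) (Ev k F))"

lemma finite_Fam: "finite (Fam n s j)"
  unfolding Fam_def by (rule finite_subset[of _ "Pow (r_subsets n s)"]) (auto simp: finite_r_subsets)

lemma finite_Uc: "finite (Uc n s k H)"
  unfolding Uc_def using finite_r_subsets by simp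

lemma choose_as_sum:
  "real (card (Uc n s k H) choose j) = (\<Sum>F\<in>Fam n s j. indicator (Ev k F) H)"
proof -
  have "(\<Sum>F\<in>Fam n s j. indicator (Ev k F) H :: real)
      = (\<Sum>F\<in>Fam n s j. if F \<subseteq> Uc n s k H then 1 else 0)"
    by (intro sum.cong refl) (auto simp: indicator_def Ev_def Good_def Uc_def Fam_def)
  also have "\<dots> = real (card {F \<in> Fam n s j. F \<subseteq> Uc n s k H})"
    using finite_Fam[of n s j] by (simp add: sum.inter_filter[symmetric])
  also have "{F \<in> Fam n s j. F \<subseteq> Uc n s k H} = {F. F \<subseteq> Uc n s k H \<and> card F = j}"
    by (auto simp: Fam_def Uc_def)
  also have "card \<dots> = card (Uc n s k H) choose j"
    by (rule n_subsets[OF finite_Uc])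
  finally show ?thesis by simp
qed

lemma integrable_pmf_ind: "integrable (measure_pmf p) (indicator A :: _ \<Rightarrow> real)"
  by (rule integrable_real_indicator) (auto simp: measure_pmf.emeasure_finite less_top[symmetric])

lemma integral_bonf:
  "measure_pmf.expectation (rounds_pmf n r k) (\<lambda>H. \<Sum>j\<le>J. (-1)^j * real (card (Uc n s k H) choose j))
   = (\<Sum>j\<le>J. (-1)^j * Sj n r s k j)"
proof -
  have "measure_pmf.expectation (rounds_pmf n r k) (\<lambda>H. \<Sum>j\<le>J. (-1)^j * real (card (Uc n s k H) choose j))
      = measure_pmf.expectation (rounds_pmf n r k) (\<lambda>H. \<Sum>j\<le>J. (-1)^j * (\<Sum>F\<in>Fam n s j. indicator (Ev k F) H))"
    by (simp only: choose_as_sum)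
  also have "\<dots> = (\<Sum>j\<le>J. measure_pmf.expectation (rounds_pmf n r k) (\<lambda>H. (-1)^j * (\<Sum>F\<in>Fam n s j. indicator (Ev k F) H)))"
    by (rule Bochner_Integration.integral_sum[where f="\<lambda>j H. (-1)^j * (\<Sum>F\<in>Fam n s j. indicator (Ev k F) H :: real)" and I="{..J}"])
      (intro integrable_mult_right Bochner_Integration.integrable_sum integrable_pmf_ind)
  also have "\<dots> = (\<Sum>j\<le>J. (-1)^j * Sj n r s k j)"
  proof (intro sum.cong refl)
    fix j
    have "measure_pmf.expectation (rounds_pmf n r k) (\<lambda>H. (-1)^j * (\<Sum>F\<in>Fam n s j. indicator (Ev k F) H :: real))
       = (-1)^j * measure_pmf.expectation (rounds_pmf n r k) (\<lambda>H. (\<Sum>F\<in>Fam n s j. indicator (Ev k F) H :: real))"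
      by (rule Bochner_Integration.integral_mult_right) (intro Bochner_Integration.integrable_sum integrable_pmf_ind)
    also have "measure_pmf.expectation (rounds_pmf n r k) (\<lambda>H. (\<Sum>F\<in>Fam n s j. indicator (Ev k F) H :: real))
       = (\<Sum>F\<in>Fam n s j. measure_pmf.expectation (rounds_pmf n r k) (indicator (Ev k F) :: _ \<Rightarrow> real))"
      by (rule Bochner_Integration.integral_sum[where f="\<lambda>F H. indicator (Ev k F) H :: real"]) (rule integrable_pmf_ind)
    finally show "measure_pmf.expectation (rounds_pmf n r k) (\<lambda>H. (-1)^j * (\<Sum>F\<in>Fam n s j. indicator (Ev k F) H :: real))
       = (-1)^j * Sj n r s k j" by (simp add: Sj_def)
  qed
  finally show ?thesis .
qed

lemma prob_bounds:
  shows "prob_T_le n r s k \<le> (\<Sum>j\<le>2*L. (-1)^j * Sj n r s k j)"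
    and "(\<Sum>j\<le>2*L+1. (-1)^j * Sj n r s k j) \<le> prob_T_le n r s k"
proof -
  let ?M = "measure_pmf (rounds_pmf n r k)"
  let ?E = "{H. all_collected_by n s k H}"
  have ind: "indicator ?E H = (if card (Uc n s k H) = 0 then 1 else 0 :: real)" for H
    using finite_Uc[of n s k H]
    by (auto simp: indicator_def all_collected_by_def Uc_def r_subsets_def)
  have P: "prob_T_le n r s k = measure_pmf.expectation (rounds_pmf n r k) (indicator ?E)"
    by (simp add: prob_T_le_def)
  have int1: "integrable ?M (\<lambda>H. \<Sum>j\<le>J. (-1)^j * real (card (Uc n s k H) choose j))" for J
    by (simp only: choose_as_sum) (intro Bochner_Integration.integrable_sum integrable_mult_right integrable_pmf_ind)
  show "prob_T_le n r s k \<le> (\<Sum>j\<le>2*L. (-1)^j * Sj n r s k j)"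
    unfolding P integral_bonf[symmetric]
    by (rule integral_mono[OF integrable_pmf_ind int1]) (simp only: ind bonf_point(1))
  show "(\<Sum>j\<le>2*L+1. (-1)^j * Sj n r s k j) \<le> prob_T_le n r s k"
    unfolding P integral_bonf[symmetric]
    by (rule integral_mono[OF int1 integrable_pmf_ind]) (simp only: ind bonf_point(2))
qed


lemma card_Fam: "card (Fam n s j) = (n choose s) choose j"
  unfolding Fam_def using n_subsets[OF finite_r_subsets, of n s j] card_r_subsets by simp

lemma Ev_prob:
  assumes F: "F \<in> Fam n s j" and sr: "s \<le> r" and rn: "r \<le> n" and sn: "s < n"
  defines "p \<equiv> real (r choose s) / real (n choose s)"
      and "d \<equiv> (real r - real s) / (real n - real s)"
  shows "measure_pmf.prob (rounds_pmf n r k) (Ev k F)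
           = (1 - real (card (Bad n r F)) / real (n choose r)) ^ k"
    and "real j * p - real j ^ 2 * p * d \<le> real (card (Bad n r F)) / real (n choose r)"
    and "real (card (Bad n r F)) / real (n choose r) \<le> real j * p"
proof -
  have Fs: "F \<subseteq> r_subsets n s" "card F = j" using F by (auto simp: Fam_def)
  have ne: "r_subsets n r \<noteq> {}" using rn by (rule r_subsets_ne)
  have cR: "card (r_subsets n r) = n choose r" by (rule card_r_subsets)
  have pos: "0 < n choose r" using rn by simp
  have pos2: "0 < n choose s" using sr rn by simp
  have BR: "Bad n r F \<subseteq> r_subsets n r" by (auto simp: Bad_def)
  have "r_subsets n r \<inter> Good F = r_subsets n r - Bad n r F" by (auto simp: Bad_def Good_def)
  hence cG: "card (r_subsets n r \<inter> Good F) = (n choose r) - card (Bad n r F)"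
    using BR finite_r_subsets cR by (simp add: card_Diff_subset finite_subset)
  have cB: "card (Bad n r F) \<le> n choose r" using BR finite_r_subsets cR card_mono by metis
  have "measure_pmf.prob (pmf_of_set (r_subsets n r)) (Good F)
        = 1 - real (card (Bad n r F)) / real (n choose r)"
    using measure_pmf_of_set[OF ne finite_r_subsets, of "Good F"] cG cR cB pos
    by (simp add: of_nat_diff field_simps)
  thus "measure_pmf.prob (rounds_pmf n r k) (Ev k F)
           = (1 - real (card (Bad n r F)) / real (n choose r)) ^ k"
    unfolding Ev_def by (simp add: prob_rounds)
  have cm: "real (n choose r) * real (r choose s) = real (n choose s) * real ((n - s) choose (r - s))"
    using choose_mult[OF sr rn] by (metis of_nat_mult)
  have pe: "real ((n - s) choose (r - s)) / real (n choose r) = p"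
    unfolding p_def using pos pos2 cm by (simp add: field_simps)
  note bb = Bad_bounds[OF Fs sr rn sn]
  show "real (card (Bad n r F)) / real (n choose r) \<le> real j * p"
    using divide_right_mono[OF bb(1), of "real (n choose r)"] pe by (simp add: times_divide_eq_right[symmetric])
  have "(real j * real ((n - s) choose (r - s))
           - real j ^ 2 * real ((n - s) choose (r - s)) * d) / real (n choose r)
        = real j * p - real j ^ 2 * p * d"
    unfolding pe[symmetric] using pos by (simp add: field_simps)
  thus "real j * p - real j ^ 2 * p * d \<le> real (card (Bad n r F)) / real (n choose r)"
    using divide_right_mono[OF bb(2), of "real (n choose r)"] unfolding d_def by simp
qed

lemma Sj_bounds:
  assumes sr: "s \<le> r" and rn: "r \<le> n" and sn: "s < n"
  defines "p \<equiv> real (r choose s) / real (n choose s)"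
      and "d \<equiv> (real r - real s) / (real n - real s)"
  assumes jp: "real j * p \<le> 1"
  shows "real ((n choose s) choose j) * (1 - real j * p) ^ k \<le> Sj n r s k j"
    and "Sj n r s k j \<le> real ((n choose s) choose j) * (1 - real j * p + real j ^ 2 * p * d) ^ k"
proof -
  have b: "(1 - real j * p) ^ k \<le> measure_pmf.prob (rounds_pmf n r k) (Ev k F)
      \<and> measure_pmf.prob (rounds_pmf n r k) (Ev k F) \<le> (1 - real j * p + real j ^ 2 * p * d) ^ k"
    if F: "F \<in> Fam n s j" for F
  proof -
    note e = Ev_prob[OF F sr rn sn, folded p_def d_def]
    have cB: "card (Bad n r F) \<le> n choose r"
      using finite_r_subsets card_r_subsets card_mono[of "r_subsets n r" "Bad n r F"]
      by (metis (no_types, lifting) Bad_def mem_Collect_eq subsetI)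
    have q1: "real (card (Bad n r F)) / real (n choose r) \<le> 1"
      using cB by (cases "n choose r = 0") (auto simp: divide_le_eq_1)
    show ?thesis unfolding e(1)
      using e(2,3) q1 jp by (auto intro!: power_mono)
  qed
  show "real ((n choose s) choose j) * (1 - real j * p) ^ k \<le> Sj n r s k j"
    unfolding Sj_def using sum_mono[of "Fam n s j" "\<lambda>_. (1 - real j * p) ^ k"] b
    by (simp add: card_Fam)
  show "Sj n r s k j \<le> real ((n choose s) choose j) * (1 - real j * p + real j ^ 2 * p * d) ^ k"
    unfolding Sj_def using sum_mono[of "Fam n s j" _ "\<lambda>_. (1 - real j * p + real j ^ 2 * p * d) ^ k"] b
    by (simp add: card_Fam)
qed



lemma exp_jlog: 
  assumes "N > 0"
  shows "exp (- (real j * (ln N + x))) = exp (- (real j * x)) / N ^ j"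
proof -
  have "exp (real j * ln N) = N ^ j" using assms by (simp add: exp_of_nat_mult)
  thus ?thesis by (simp add: algebra_simps exp_add exp_diff exp_minus field_simps)
qed

lemma key_lower:
  fixes p N x :: real and j k :: nat
  assumes p: "p > 0" and jp: "real j * p \<le> 1/2" and N: "N > 0"
      and L: "ln N + x \<ge> 0" and k: "real k \<le> (ln N + x) / p"
  shows "exp (- (real j * x)) / N ^ j * exp (- (2 * real j ^ 2 * p * (ln N + x))) \<le> (1 - real j * p) ^ k"
proof -
  define z where "z = real j * p"
  define L where "L = ln N + x"
  have z0: "0 \<le> z" using p by (simp add: z_def)
  have "exp (- z - 2 * z^2) \<le> exp (ln (1 - z))"
    unfolding exp_le_cancel_iff using ln_one_minus_pos_lower_bound[OF z0] jp by (simp add: z_def)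
  also have "\<dots> = 1 - z" using jp by (simp add: z_def)
  finally have e: "exp (- z - 2 * z^2) \<le> 1 - z" .
  have "exp (real k * (- z - 2 * z^2)) = exp (- z - 2 * z^2) ^ k" by (rule exp_of_nat_mult)
  also have "\<dots> \<le> (1 - z) ^ k" by (rule power_mono[OF e]) simp
  finally have A: "exp (real k * (- z - 2 * z^2)) \<le> (1 - z) ^ k" .
  have w: "0 \<le> z + 2 * z^2" using z0 by simp
  have "L / p * (- z - 2 * z^2) \<le> real k * (- z - 2 * z^2)"
  proof -
    have h: "real k * (z + 2 * z^2) \<le> L / p * (z + 2 * z^2)" using mult_right_mono[OF k w] unfolding L_def .
    have e: "L / p * (- z - 2 * z^2) = - (L / p * (z + 2 * z^2))" "real k * (- z - 2 * z^2) = - (real k * (z + 2 * z^2))"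
      by (simp_all add: algebra_simps)
    show ?thesis unfolding e neg_le_iff_le by (rule h)
  qed
  moreover have "L / p * (- z - 2 * z^2) = - (real j * (ln N + x)) - 2 * real j ^ 2 * p * (ln N + x)"
    using p unfolding z_def L_def by (simp add: field_simps power2_eq_square)
  ultimately have "exp (- (real j * (ln N + x)) - 2 * real j ^ 2 * p * (ln N + x)) \<le> exp (real k * (- z - 2 * z^2))"
    by simp
  also note A
  finally have B: "exp (- (real j * (ln N + x)) - 2 * real j ^ 2 * p * (ln N + x)) \<le> (1 - real j * p) ^ k"
    by (simp add: z_def)
  have "exp (- (real j * (ln N + x)) - 2 * real j ^ 2 * p * (ln N + x))
      = exp (- (real j * (ln N + x))) * exp (- (2 * real j ^ 2 * p * (ln N + x)))"
    by (simp add: exp_add[symmetric])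
  also have "\<dots> = exp (- (real j * x)) / N ^ j * exp (- (2 * real j ^ 2 * p * (ln N + x)))"
    unfolding exp_jlog[OF N, of j x] ..
  finally show ?thesis using B by simp
qed

lemma key_upper:
  fixes p N x d :: real and j k :: nat
  assumes p: "p > 0" and jp: "real j * p \<le> 1/2" and N: "N > 0" and d: "0 \<le> d" "real j * d \<le> 1"
      and L: "ln N + x \<ge> 0" and k: "real k \<ge> (ln N + x) / p - 1"
  shows "(1 - real j * p + real j ^ 2 * p * d) ^ k
         \<le> exp (- (real j * x)) / N ^ j * exp (real j ^ 2 * d * (ln N + x) + real j * p)"
proof -
  define v where "v = real j * p - real j ^ 2 * p * d"
  have v0: "0 \<le> v"
  proof -
    have "real j ^ 2 * p * d = (real j * d) * (real j * p)" by (simp add: power2_eq_square)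
    also have "\<dots> \<le> 1 * (real j * p)" using d p by (intro mult_right_mono) auto
    finally show ?thesis unfolding v_def by simp
  qed
  have vle: "v \<le> real j * p" using p d unfolding v_def by simp
  have y0: "0 \<le> 1 - v" using vle jp by simp
  have "(1 - v) ^ k \<le> exp (- v) ^ k"
    by (rule power_mono[OF _ y0]) (use exp_ge_add_one_self[of "- v"] in simp)
  also have "\<dots> = exp (real k * (- v))" by (rule exp_of_nat_mult[symmetric])
  also have "real k * (- v) \<le> ((ln N + x) / p - 1) * (- v)"
    using mult_right_mono[OF k v0] by simp
  also have "((ln N + x) / p - 1) * (- v) = - (real j * (ln N + x)) + real j ^ 2 * d * (ln N + x) + v"
    using p unfolding v_def by (simp add: field_simps power2_eq_square)
  also have "\<dots> \<le> - (real j * (ln N + x)) + (real j ^ 2 * d * (ln N + x) + real j * p)"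
    using vle by simp
  finally have "(1 - v) ^ k \<le> exp (- (real j * (ln N + x)) + (real j ^ 2 * d * (ln N + x) + real j * p))"
    by simp
  also have "\<dots> = exp (- (real j * (ln N + x))) * exp (real j ^ 2 * d * (ln N + x) + real j * p)"
    by (rule exp_add)
  also have "\<dots> = exp (- (real j * x)) / N ^ j * exp (real j ^ 2 * d * (ln N + x) + real j * p)"
    unfolding exp_jlog[OF N, of j x] ..
  finally show ?thesis unfolding v_def by (simp add: algebra_simps)
qed


lemma choose_tendsto_at_top:
  assumes s: "1 \<le> s"
  shows "filterlim (\<lambda>n::nat. n choose s) at_top sequentially"
  unfolding filterlim_at_top
proof
  fix Z :: nat
  show "eventually (\<lambda>n. Z \<le> n choose s) sequentially"
    unfolding eventually_sequentially
  proof (intro exI allI impI)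
    fix n assume n: "s * Z + s \<le> n"
    have sn: "s \<le> n" using n by simp
    have ge1: "1 \<le> real n / real s" using sn s by simp
    have "real Z \<le> real n / real s"
    proof -
      have "real s * real Z \<le> real n" using n by (metis of_nat_le_iff of_nat_mult le_add1 order_trans)
      thus ?thesis using s by (simp add: field_simps)
    qed
    also have "\<dots> = (real n / real s) ^ 1" by simp
    also have "\<dots> \<le> (real n / real s) ^ s" by (rule power_increasing[OF s ge1])
    also have "\<dots> \<le> real (n choose s)" by (rule binomial_ge_n_over_k_pow_k[OF sn])
    finally show "Z \<le> n choose s" by simp
  qed
qed

lemma choose_over_pow:
  "(\<lambda>m::nat. real (m choose j) / real m ^ j) \<longlonglongrightarrow> 1 / fact j"
proof -
  have lim: "(\<lambda>m::nat. (\<Prod>i\<in>{0..<j}. (real m - real i) / real m) / fact j) \<longlonglongrightarrow> (\<Prod>i\<in>{0..<j}. 1) / fact j"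
  proof (intro tendsto_divide tendsto_prod tendsto_const)
    fix i :: nat
    show "(\<lambda>m::nat. (real m - real i) / real m) \<longlonglongrightarrow> 1" by real_asymp
  qed simp
  have ev: "eventually (\<lambda>m::nat. (\<Prod>i\<in>{0..<j}. (real m - real i) / real m) / fact j = real (m choose j) / real m ^ j) sequentially"
    unfolding eventually_sequentially
  proof (intro exI[of _ 1] allI impI)
    fix m :: nat assume "1 \<le> m"
    have "real (m choose j) = (\<Prod>i\<in>{0..<j}. real m - real i) / fact j"
      by (simp add: binomial_gbinomial gbinomial_prod_rev)
    moreover have "(\<Prod>i\<in>{0..<j}. (real m - real i) / real m) = (\<Prod>i\<in>{0..<j}. real m - real i) / real m ^ j"
      by (simp add: prod_dividef)
    ultimately show "(\<Prod>i\<in>{0..<j}. (real m - real i) / real m) / fact j = real (m choose j) / real m ^ j"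
      by simp
  qed
  show ?thesis using Lim_transform_eventually[OF lim ev] by simp
qed

lemma asym1: "(\<lambda>m::nat. c / real m * (ln (real m) + x)) \<longlonglongrightarrow> 0"
  by real_asymp

lemma asym2: "(\<lambda>m::nat. c / real m) \<longlonglongrightarrow> 0"
  by real_asymp

lemma asym3: "(\<lambda>n::nat. (real r - real s) / (real n - real s) * (real s * ln (real n) + \<bar>x\<bar>)) \<longlonglongrightarrow> 0"
  by real_asymp

lemma asym4: "(\<lambda>n::nat. (real r - real s) / (real n - real s)) \<longlonglongrightarrow> 0"
  by real_asymp

lemma asym5: "eventually (\<lambda>m::nat. 0 \<le> ln (real m) + x) sequentially"
  by real_asymp


lemma Sj_lim:
  fixes x :: real
  assumes s: "1 \<le> s" and sr: "s \<le> r"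
  defines "kk \<equiv> \<lambda>n. nat \<lfloor>real (n choose s) / real (r choose s) * ln (real (n choose s))
                      + real (n choose s) / real (r choose s) * x\<rfloor>"
  shows "(\<lambda>n. Sj n r s (kk n) j) \<longlonglongrightarrow> exp (- (real j * x)) / fact j"
proof -
  define c where "c = real (r choose s)"
  have c: "c > 0" using sr by (simp add: c_def)
  define Nr where "Nr = (\<lambda>n. real (n choose s))"
  define p where "p = (\<lambda>n. c / Nr n)"
  define d where "d = (\<lambda>n::nat. (real r - real s) / (real n - real s))"
  define L where "L = (\<lambda>n. ln (Nr n) + x)"
  note F1 = choose_tendsto_at_top[OF s]
  have F2: "(\<lambda>n. real ((n choose s) choose j) / Nr n ^ j) \<longlonglongrightarrow> 1 / fact j"
    using filterlim_compose[OF choose_over_pow[of j] F1] unfolding Nr_def by simp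
  have F3: "(\<lambda>n. p n * L n) \<longlonglongrightarrow> 0"
    using filterlim_compose[OF asym1[of c x] F1] unfolding p_def L_def Nr_def by simp
  have F5: "p \<longlonglongrightarrow> 0"
    using filterlim_compose[OF asym2[of c] F1] unfolding p_def Nr_def by simp
  have E1: "eventually (\<lambda>n. 0 \<le> L n) sequentially"
    using eventually_compose_filterlim[OF asym5[of x] F1] unfolding L_def Nr_def by simp
  have E2: "eventually (\<lambda>n. r < n) sequentially" by (rule eventually_gt_at_top)
  have F6: "d \<longlonglongrightarrow> 0" unfolding d_def by (rule asym4)
  have F4: "(\<lambda>n. d n * L n) \<longlonglongrightarrow> 0"
  proof (rule tendsto_sandwich[OF _ _ tendsto_const asym3[of r s x]])
    show "eventually (\<lambda>n. 0 \<le> d n * L n) sequentially"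
      using E1 E2 by eventually_elim (use sr in \<open>auto simp: d_def intro!: mult_nonneg_nonneg divide_nonneg_nonneg\<close>)
    show "eventually (\<lambda>n. d n * L n \<le> (real r - real s) / (real n - real s) * (real s * ln (real n) + \<bar>x\<bar>)) sequentially"
      using E2
    proof eventually_elim
      case (elim n)
      have pos: "0 < Nr n" using elim sr by (simp add: Nr_def)
      have "Nr n \<le> real n ^ s" unfolding Nr_def using binomial_le_pow[of s n] elim sr
        by (metis le_trans less_imp_le of_nat_le_iff of_nat_power)
      hence "ln (Nr n) \<le> ln (real n ^ s)" using pos by (intro ln_mono)
      also have "\<dots> = real s * ln (real n)" using elim by (simp add: ln_realpow)
      finally have "L n \<le> real s * ln (real n) + \<bar>x\<bar>" unfolding L_def by linarith
      moreover have "0 \<le> d n" using elim sr by (simp add: d_def)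
      ultimately have "d n * L n \<le> d n * (real s * ln (real n) + \<bar>x\<bar>)" by (rule mult_left_mono)
      thus ?case by (simp add: d_def)
    qed
  qed
  have E3: "eventually (\<lambda>n. real j * p n < 1/2) sequentially"
    using tendsto_mult[OF tendsto_const[of "real j"] F5] by (intro order_tendstoD(2)) auto
  have E4: "eventually (\<lambda>n. real j * d n < 1) sequentially"
    using tendsto_mult[OF tendsto_const[of "real j"] F6] by (intro order_tendstoD(2)) auto
  define Lo where "Lo = (\<lambda>n. real ((n choose s) choose j) / Nr n ^ j
                     * (exp (- (real j * x)) * exp (- (2 * real j ^ 2 * (p n * L n)))))"
  define Up where "Up = (\<lambda>n. real ((n choose s) choose j) / Nr n ^ j
                     * (exp (- (real j * x)) * exp (real j ^ 2 * (d n * L n) + real j * p n)))"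
  have "Lo \<longlonglongrightarrow> 1 / fact j * (exp (- (real j * x)) * exp (- (2 * real j ^ 2 * 0)))"
    unfolding Lo_def by (intro tendsto_intros F2 F3)
  hence LoL: "Lo \<longlonglongrightarrow> exp (- (real j * x)) / fact j" by simp
  have "Up \<longlonglongrightarrow> 1 / fact j * (exp (- (real j * x)) * exp (real j ^ 2 * 0 + real j * 0))"
    unfolding Up_def by (intro tendsto_intros F2 F4 F5)
  hence UpL: "Up \<longlonglongrightarrow> exp (- (real j * x)) / fact j" by simp
  have ev: "eventually (\<lambda>n. Lo n \<le> Sj n r s (kk n) j \<and> Sj n r s (kk n) j \<le> Up n) sequentially"
    using E1 E2 E3 E4
  proof eventually_elim
    case (elim n)
    have rn: "r \<le> n" and sn: "s < n" using elim sr by auto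
    have pos: "0 < Nr n" using elim sr by (simp add: Nr_def)
    have pp: "0 < p n" using pos c by (simp add: p_def)
    have pe: "p n = real (r choose s) / real (n choose s)" by (simp add: p_def c_def Nr_def)
    have de: "d n = (real r - real s) / (real n - real s)" by (simp add: d_def)
    have d0: "0 \<le> d n" using sn sr by (simp add: d_def)
    have jp1: "real j * p n \<le> 1" using elim by simp
    note SB = Sj_bounds[OF sr rn sn, of j "kk n", folded pe de, OF jp1]
    define z where "z = real (n choose s) / real (r choose s) * ln (real (n choose s))
                      + real (n choose s) / real (r choose s) * x"
    have z: "z = L n / p n" using pp c pos unfolding z_def L_def p_def Nr_def c_def
      by (simp add: field_simps)
    have z0: "0 \<le> z" unfolding z using elim pp by simp
    have kz: "real (kk n) = real_of_int \<lfloor>z\<rfloor>" unfolding kk_def z_def[symmetric] using z0 by simp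
    have k1: "real (kk n) \<le> L n / p n" unfolding kz z[symmetric] by simp
    have k2: "L n / p n - 1 \<le> real (kk n)" unfolding kz z[symmetric] by linarith
    have C0: "0 \<le> real ((n choose s) choose j)" by simp
    have kl: "exp (- (real j * x)) / Nr n ^ j * exp (- (2 * real j ^ 2 * p n * (ln (Nr n) + x))) \<le> (1 - real j * p n) ^ kk n"
      by (rule key_lower[OF pp _ pos]) (use elim k1 in \<open>auto simp: L_def\<close>)
    have ku: "(1 - real j * p n + real j ^ 2 * p n * d n) ^ kk n
         \<le> exp (- (real j * x)) / Nr n ^ j * exp (real j ^ 2 * d n * (ln (Nr n) + x) + real j * p n)"
      by (rule key_upper[OF pp _ pos d0]) (use elim k2 in \<open>auto simp: L_def\<close>)
    have "Lo n = real ((n choose s) choose j) * (exp (- (real j * x)) / Nr n ^ j * exp (- (2 * real j ^ 2 * p n * (ln (Nr n) + x))))"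
      unfolding Lo_def L_def by (simp add: algebra_simps)
    also have "\<dots> \<le> real ((n choose s) choose j) * (1 - real j * p n) ^ kk n"
      by (rule mult_left_mono[OF kl C0])
    also have "\<dots> \<le> Sj n r s (kk n) j" by (rule SB(1))
    finally have 1: "Lo n \<le> Sj n r s (kk n) j" .
    have "Sj n r s (kk n) j \<le> real ((n choose s) choose j) * (1 - real j * p n + real j ^ 2 * p n * d n) ^ kk n"
      by (rule SB(2))
    also have "\<dots> \<le> real ((n choose s) choose j) * (exp (- (real j * x)) / Nr n ^ j * exp (real j ^ 2 * d n * (ln (Nr n) + x) + real j * p n))"
      by (rule mult_left_mono[OF ku C0])
    also have "\<dots> = Up n"
      unfolding Up_def L_def by (simp add: algebra_simps)
    finally have 2: "Sj n r s (kk n) j \<le> Up n" .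
    show ?case using 1 2 by simp
  qed
  show ?thesis
    by (rule tendsto_sandwich[OF _ _ LoL UpL]) (use ev in \<open>auto elim: eventually_mono\<close>)
qed


lemma gumbel_series:
  "(\<lambda>j. (-1)^j * (exp (- (real j * x)) / fact j)) sums gumbel_cdf x"
proof -
  have S: "(\<lambda>j. (- exp (- x))^j /\<^sub>R fact j) sums exp (- exp (- x))" by (rule exp_converges)
  have eq: "(- exp (- x))^j /\<^sub>R fact j = (-1)^j * (exp (- (real j * x)) / fact j)" for j :: nat
  proof -
    have e1: "exp (- (real j * x)) = exp (- x) ^ j"
      using exp_of_nat_mult[of j "- x"] by simp
    have e2: "(- exp (- x))^j = (-1)^j * exp (- x) ^ j" by (rule power_minus)
    show ?thesis unfolding e1 e2 real_scaleR_def by (simp only: divide_inverse mult_ac)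
  qed
  show ?thesis using S unfolding eq gumbel_cdf_def .
qed

theorem theorem3:
  fixes r s :: nat
  assumes "1 \<le> s" and "s \<le> r"
  shows "weak_conv (T_norm_cdf r s) gumbel_cdf"
  unfolding weak_conv_def
proof (intro allI impI)
  fix x :: real
  define kk where "kk \<equiv> \<lambda>n. nat \<lfloor>real (n choose s) / real (r choose s) * ln (real (n choose s))
                      + real (n choose s) / real (r choose s) * x\<rfloor>"
  define a where "a = (\<lambda>j::nat. (-1)^j * (exp (- (real j * x)) / fact j))"
  define G where "G = gumbel_cdf x"
  have P: "T_norm_cdf r s n x = prob_T_le n r s (kk n)" for n
    unfolding T_norm_cdf_def kk_def Let_def by simp
  have lim: "(\<lambda>n. (-1)^j * Sj n r s (kk n) j) \<longlonglongrightarrow> a j" for j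
    unfolding a_def kk_def by (intro tendsto_mult tendsto_const Sj_lim assms)
  have ser: "(\<lambda>M. \<Sum>j<M. a j) \<longlonglongrightarrow> G"
    using gumbel_series[of x] unfolding sums_def a_def G_def .
  show "(\<lambda>n. T_norm_cdf r s n x) \<longlonglongrightarrow> gumbel_cdf x"
    unfolding P G_def[symmetric]
  proof (rule tendstoI)
    fix e :: real assume e: "e > 0"
    have "eventually (\<lambda>M. dist (\<Sum>j<M. a j) G < e/2) sequentially"
      using tendstoD[OF ser, of "e/2"] e by simp
    then obtain M0 where M0: "\<And>M. M \<ge> M0 \<Longrightarrow> dist (\<Sum>j<M. a j) G < e/2"
      unfolding eventually_sequentially by blast
    define L where "L = M0"
    have hU: "\<bar>(\<Sum>j\<le>2*L. a j) - G\<bar> < e/2"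
      using M0[of "Suc (2*L)"] by (simp add: L_def lessThan_Suc_atMost dist_real_def)
    have hL: "\<bar>(\<Sum>j\<le>2*L+1. a j) - G\<bar> < e/2"
      using M0[of "Suc (2*L+1)"] by (simp add: L_def lessThan_Suc_atMost dist_real_def)
    have limU: "(\<lambda>n. \<Sum>j\<le>2*L. (-1)^j * Sj n r s (kk n) j) \<longlonglongrightarrow> (\<Sum>j\<le>2*L. a j)"
      by (intro tendsto_sum lim)
    have limL: "(\<lambda>n. \<Sum>j\<le>2*L+1. (-1)^j * Sj n r s (kk n) j) \<longlonglongrightarrow> (\<Sum>j\<le>2*L+1. a j)"
      by (intro tendsto_sum lim)
    have evU: "eventually (\<lambda>n. (\<Sum>j\<le>2*L. (-1)^j * Sj n r s (kk n) j) < (\<Sum>j\<le>2*L. a j) + e/2) sequentially"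
      using e by (intro order_tendstoD(2)[OF limU]) simp
    have evL: "eventually (\<lambda>n. (\<Sum>j\<le>2*L+1. a j) - e/2 < (\<Sum>j\<le>2*L+1. (-1)^j * Sj n r s (kk n) j)) sequentially"
      using e by (intro order_tendstoD(1)[OF limL]) simp
    show "eventually (\<lambda>n. dist (prob_T_le n r s (kk n)) G < e) sequentially"
      using evU evL
    proof eventually_elim
      case (elim n)
      have 1: "prob_T_le n r s (kk n) \<le> (\<Sum>j\<le>2*L. (-1)^j * Sj n r s (kk n) j)"
        by (rule prob_bounds(1))
      have 2: "(\<Sum>j\<le>2*L+1. (-1)^j * Sj n r s (kk n) j) \<le> prob_T_le n r s (kk n)"
        by (rule prob_bounds(2))
      show ?case using 1 2 elim hU hL unfolding dist_real_def abs_less_iff by linarith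
    qed
  qed
qed


end
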